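(* As formal power series, $$1+\sum_{n\ge1}H_{2n-1}s^n=\cfrac{1}{1-\cfrac{1^2s}{1-\cfrac{1^2s}{1-\cfrac{2^2s}{1-\cfrac{2^2s}{1-\cfrac{3^2 s}{1-\cfrac{3^2s}{1-\cdots}}}}}}},$$ i.e. the partial numerators are $e_{2m-1}s=e_{2m}s=m^2s$ for $m\ge1$.
   Context: The median Genocchi numbers $H_{2n-1}$ ($1,2,8,56,608,\dots$) are defined via the Seidel triangle: numbers $g_{k,m}$, $m\ge1$, $1\le k\le (m+1)/2$, with $g_{1,1}=1$, $g_{k,2m}=\sum_{i\ge k}g_{i,2m-1}$, $g_{k,2m+1}=\sum_{i\le k}g_{i,2m}$, and $H_{2n-1}=g_{1,2n}$. *)

theory Defs
  imports "HOL-Computational_Algebra.Formal_Power_Series"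
begin

text \<open>Seidel triangle: seidel k m = g_{k,m} for m \<ge> 1 and 1 \<le> k \<le> (m+1)/2; zero outside this range.\<close>
fun seidel :: "nat \<Rightarrow> nat \<Rightarrow> nat" where
  "seidel k 0 = 0"
| "seidel k (Suc 0) = (if k = 1 then 1 else 0)"
| "seidel k (Suc (Suc m)) =
     (if k < 1 \<or> k > (m + 3) div 2 then 0
      else if even m then (\<Sum>i\<in>{k..(m + 2) div 2}. seidel i (Suc m))
      else (\<Sum>i\<in>{1..k}. seidel i (Suc m)))"

text \<open>Median Genocchi number H_{2n-1} = g_{1,2n}.\<close>
definition median_genocchi :: "nat \<Rightarrow> nat" where
  "median_genocchi n = seidel 1 (2 * n)"

definition cf_e :: "nat \<Rightarrow> nat" where
  "cf_e j = ((j + 1) div 2) ^ 2"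

fun cf_tail :: "nat \<Rightarrow> nat \<Rightarrow> rat fps" where
  "cf_tail j 0 = 1"
| "cf_tail j (Suc d) = inverse (1 - fps_const (of_nat (cf_e j)) * fps_X * cf_tail (Suc j) d)"

end

theory Submission
  imports Defs
begin


fun Ab :: "nat \<Rightarrow> nat \<Rightarrow> nat \<Rightarrow> nat \<Rightarrow> rat" where
  "Ab j d 0 h = (if h = 0 then 1 else 0)"
| "Ab j d (Suc n) h = (if h = 0 then 0 else Ab j d n (h - 1))
      + (if h < d then of_nat (cf_e (j + h)) * Ab j d n (Suc h) else 0)"

lemma Ab_zero: "n < h \<Longrightarrow> Ab j d n h = 0"
  by (induction n arbitrary: h) auto

definition G :: "nat \<Rightarrow> nat \<Rightarrow> nat \<Rightarrow> rat fps" where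
  "G j d h = Abs_fps (\<lambda>n. Ab j d (2*n+h) h)"

lemma G_top: "0 < d \<Longrightarrow> G j d d = G j d (d-1)"
proof -
  assume d: "0 < d"
  then obtain d' where d': "d = Suc d'" by (cases d) auto
  show ?thesis
  proof (rule fps_ext)
    fix n
    have "2*n+d = Suc (2*n+d')" using d' by simp
    then show "fps_nth (G j d d) n = fps_nth (G j d (d-1)) n" using d' by (simp add: G_def)
  qed
qed

lemma G_mid: "0 < h \<Longrightarrow> h < d \<Longrightarrow>
   G j d h = G j d (h-1) + fps_const (of_nat (cf_e (j+h))) * fps_X * G j d (Suc h)"
proof (rule fps_ext)
  fix n assume h: "0 < h" "h < d"
  obtain h' where h': "h = Suc h'" using h by (cases h) auto
  have e: "2*n+h = Suc (2*n+h')" using h' by simp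
  show "fps_nth (G j d h) n = fps_nth (G j d (h-1) + fps_const (of_nat (cf_e (j+h))) * fps_X * G j d (Suc h)) n"
  proof (cases n)
    case 0
    then show ?thesis using h h' by (simp add: G_def Ab_zero mult.assoc)
  next
    case (Suc m)
    have "2*n+h' = 2*m + Suc h" using h' Suc by simp
    then show ?thesis using h h' Suc e by (simp add: G_def mult.assoc)
  qed
qed

lemma G_0: "0 < d \<Longrightarrow> G j d 0 = 1 + fps_const (of_nat (cf_e j)) * fps_X * G j d 1"
proof (rule fps_ext)
  fix n assume d: "0 < d"
  show "fps_nth (G j d 0) n = fps_nth (1 + fps_const (of_nat (cf_e j)) * fps_X * G j d 1) n"
  proof (cases n)
    case 0 then show ?thesis by (simp add: G_def)
  next
    case (Suc m)
    have "2*n = Suc (2*m+1)" using Suc by simp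
    then show ?thesis using d Suc by (simp add: G_def mult.assoc)
  qed
qed

lemma G_d0: "G j 0 0 = 1"
proof (rule fps_ext)
  fix n show "fps_nth (G j 0 0) n = fps_nth 1 n"
    by (cases n) (simp_all add: G_def)
qed

lemma G_tail: "0 < h \<Longrightarrow> h \<le> d \<Longrightarrow> G j d h = cf_tail (j+h) (d-h) * G j d (h-1)"
proof (induction "d-h" arbitrary: h)
  case 0
  then have "h = d" by simp
  then show ?case using 0 G_top[of d j] by simp
next
  case (Suc i)
  then have hd: "h < d" and i: "i = d - Suc h" by auto
  have IH: "G j d (Suc h) = cf_tail (j + Suc h) (d - Suc h) * G j d h"
    using Suc.hyps(1)[of "Suc h"] Suc.hyps(2) hd by simp
  define K where "K = cf_tail (Suc (j + h)) (d - Suc h)"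
  define F where "F = 1 - fps_const (of_nat (cf_e (j+h))) * fps_X * K"
  have F0: "fps_nth F 0 = 1" by (simp add: F_def)
  have "G j d h = G j d (h-1) + fps_const (of_nat (cf_e (j+h))) * fps_X * (K * G j d h)"
    using G_mid[of h d j] Suc.prems hd IH by (simp add: K_def)
  then have "F * G j d h = G j d (h-1)" by (simp add: F_def algebra_simps)
  then have "inverse F * (F * G j d h) = inverse F * G j d (h-1)" by simp
  then have "G j d h = inverse F * G j d (h-1)"
    using inverse_mult_eq_1[of F] F0 by (simp add: mult.assoc[symmetric])
  moreover have "d - h = Suc (d - Suc h)" using hd by simp
  ultimately show ?case by (simp add: F_def K_def)
qed

lemma cf_tail_G: "cf_tail j d = G j d 0"
proof (cases d)
  case 0 then show ?thesis by (simp add: G_d0)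
next
  case (Suc d')
  define K where "K = cf_tail (Suc j) d'"
  define F where "F = 1 - fps_const (of_nat (cf_e j)) * fps_X * K"
  have F0: "fps_nth F 0 = 1" by (simp add: F_def)
  have "G j d 1 = K * G j d 0" using G_tail[of 1 d j] Suc by (simp add: K_def)
  then have "G j d 0 = 1 + fps_const (of_nat (cf_e j)) * fps_X * (K * G j d 0)"
    using G_0[of d j] Suc by simp
  then have "F * G j d 0 = 1" by (simp add: F_def algebra_simps)
  then have "inverse F * (F * G j d 0) = inverse F" by simp
  then have "G j d 0 = inverse F"
    using inverse_mult_eq_1[of F] F0 by (simp add: mult.assoc[symmetric])
  then show ?thesis using Suc by (simp add: F_def K_def)
qed

lemma cf_tail_nth: "fps_nth (cf_tail j d) n = Ab j d (2*n) 0"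
  by (simp add: cf_tail_G G_def)

fun Au :: "nat \<Rightarrow> nat \<Rightarrow> nat \<Rightarrow> rat" where
  "Au j 0 h = (if h = 0 then 1 else 0)"
| "Au j (Suc n) h = (if h = 0 then 0 else Au j n (h - 1))
      + of_nat (cf_e (j + h)) * Au j n (Suc h)"

lemma Au_zero: "n < h \<Longrightarrow> Au j n h = 0"
  by (induction n arbitrary: h) auto

lemma Ab_Au: "h \<le> d \<Longrightarrow> n + h \<le> 2*d \<Longrightarrow> Ab j d n h = Au j n h"
proof (induction n arbitrary: h)
  case 0 then show ?case by simp
next
  case (Suc n)
  show ?case
  proof (cases "h < d")
    case True then show ?thesis using Suc by auto
  next
    case False
    then have "h = d" using Suc by simp
    moreover have "Au j n (Suc h) = 0" using Suc \<open>h = d\<close> by (intro Au_zero) simp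
    ultimately show ?thesis using Suc by auto
  qed
qed



definition J :: "nat \<Rightarrow> nat \<Rightarrow> rat" where "J n k = Au 1 (2*n) (2*k)"

lemma cf_e_even: "cf_e (2*k) = k^2" by (simp add: cf_e_def)
lemma cf_e_odd: "cf_e (Suc (2*k)) = (Suc k)^2" by (simp add: cf_e_def)

lemma J_zero: "n < k \<Longrightarrow> J n k = 0" by (simp add: J_def Au_zero)

lemma J_rec: "J (Suc n) k = (if k = 0 then 0 else J n (k-1))
   + of_nat (k^2 + (k+1)^2) * J n k + of_nat ((k+1)^4) * J n (Suc k)"
proof (cases k)
  case 0
  have "J (Suc n) k = Au 1 (Suc (Suc (2*n))) 0" using 0 by (simp add: J_def)
  also have "\<dots> = of_nat (cf_e 1) * (Au 1 (2*n) 0 + of_nat (cf_e 2) * Au 1 (2*n) 2)"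
    by (simp add: numeral_2_eq_2)
  moreover have "cf_e 1 = 1" "cf_e 2 = 1" by (simp_all add: cf_e_def)
  ultimately show ?thesis using 0 by (simp add: J_def)
next
  case (Suc k')
  have a: "2*k = Suc (Suc (2*k'))" using Suc by simp
  have "J (Suc n) k = Au 1 (Suc (Suc (2*n))) (2*k)" by (simp add: J_def)
  also have "\<dots> = Au 1 (Suc (2*n)) (Suc (2*k')) + of_nat (cf_e (Suc (2*k))) * Au 1 (Suc (2*n)) (Suc (2*k))"
    using a by simp
  also have "Au 1 (Suc (2*n)) (Suc (2*k')) = Au 1 (2*n) (2*k') + of_nat (cf_e (2*k)) * Au 1 (2*n) (2*k)"
    using a by simp
  also have "Au 1 (Suc (2*n)) (Suc (2*k)) = Au 1 (2*n) (2*k) + of_nat (cf_e (2*Suc k)) * Au 1 (2*n) (2*Suc k)"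
    by simp
  finally show ?thesis using Suc
    by (simp only: J_def cf_e_even cf_e_odd) (simp add: algebra_simps power2_eq_square power4_eq_xxxx)
qed

definition Cop :: "(rat \<Rightarrow> rat) \<Rightarrow> rat \<Rightarrow> rat" where
  "Cop f y = (y+1)^2 * f (y+1) - y*(y+1) * f y"

fun ff :: "nat \<Rightarrow> rat \<Rightarrow> rat" where
  "ff 0 y = 1"
| "ff (Suc k) y = ff k y * (y - of_nat k)"

definition pb :: "nat \<Rightarrow> rat \<Rightarrow> rat" where "pb k y = fact k * ff k y"

lemma ff_shift: "ff (Suc k) (y+1) = (y+1) * ff k y"
  by (induction k) (simp_all add: algebra_simps)

lemma ff_0: "ff (Suc k) 0 = 0"
  by (induction k) simp_all

lemma Cop_pb: "Cop (pb k) y = pb (Suc k) y + of_nat (k^2 + (k+1)^2) * pb k y + of_nat (k^4) * pb (k-1) y"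
proof (cases k)
  case 0 then show ?thesis by (simp add: Cop_def pb_def power2_eq_square algebra_simps)
next
  case (Suc m)
  define F where "F = ff m y"
  define c where "c = (fact m :: rat)"
  have 1: "pb k (y+1) = c * of_nat (Suc m) * (y+1) * F"
  proof -
    have "pb k (y+1) = fact (Suc m) * ff (Suc m) (y+1)" using Suc by (simp add: pb_def)
    also have "ff (Suc m) (y+1) = (y+1) * F" by (simp only: ff_shift F_def)
    finally show ?thesis by (simp add: c_def fact_Suc algebra_simps)
  qed
  have 2: "pb k y = c * of_nat (Suc m) * F * (y - of_nat m)" using Suc
    by (simp add: pb_def F_def c_def fact_Suc algebra_simps)
  have 3: "pb (Suc k) y = c * of_nat (Suc m) * of_nat (Suc (Suc m)) * F * (y - of_nat m) * (y - of_nat (Suc m))"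
    using Suc by (simp add: pb_def F_def c_def fact_Suc algebra_simps)
  have 4: "pb (k-1) y = c * F" using Suc by (simp add: pb_def F_def c_def)
  show ?thesis unfolding Cop_def 1 2 3 4 using Suc
    by (simp add: algebra_simps power2_eq_square power4_eq_xxxx)
qed

lemma Cop_sum: "Cop (\<lambda>y. \<Sum>k\<in>A. a k * P k y) y = (\<Sum>k\<in>A. a k * Cop (P k) y)"
  unfolding Cop_def sum_distrib_left right_diff_distrib sum_subtractf
  by (simp add: mult.left_commute)

lemma Cop_iter: "(Cop ^^ n) (\<lambda>_. 1) y = (\<Sum>k\<le>n. J n k * pb k y)"
proof (induction n arbitrary: y)
  case 0 then show ?case by (simp add: J_def pb_def)
next
  case (Suc n)
  have eqf: "(Cop ^^ n) (\<lambda>_. 1) = (\<lambda>y. \<Sum>k\<le>n. J n k * pb k y)" using Suc.IH by (rule ext)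
  have "(Cop ^^ Suc n) (\<lambda>_. 1) y = Cop (\<lambda>y. \<Sum>k\<le>n. J n k * pb k y) y" by (simp add: eqf)
  also have "\<dots> = (\<Sum>k\<le>n. J n k * Cop (pb k) y)" by (rule Cop_sum)
  also have "\<dots> = (\<Sum>k\<le>n. J n k * pb (Suc k) y) + (\<Sum>k\<le>n. of_nat (k^2 + (k+1)^2) * J n k * pb k y)
       + (\<Sum>k\<le>n. of_nat (k^4) * J n k * pb (k-1) y)"
  proof -
    have "\<And>k. J n k * Cop (pb k) y = J n k * pb (Suc k) y + of_nat (k^2 + (k+1)^2) * J n k * pb k y
        + of_nat (k^4) * J n k * pb (k-1) y"
      by (simp add: Cop_pb distrib_left mult.left_commute)
    then show ?thesis by (simp only: sum.distrib)
  qed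
  also have "(\<Sum>k\<le>n. J n k * pb (Suc k) y) = (\<Sum>k\<le>Suc n. (if k = 0 then 0 else J n (k-1)) * pb k y)"
    by (simp add: sum.atMost_Suc_shift del: sum.atMost_Suc)
  also have "(\<Sum>k\<le>n. of_nat (k^2 + (k+1)^2) * J n k * pb k y) = (\<Sum>k\<le>Suc n. of_nat (k^2 + (k+1)^2) * J n k * pb k y)"
    by (simp add: J_zero)
  also have "(\<Sum>k\<le>n. of_nat (k^4) * J n k * pb (k-1) y) = (\<Sum>k\<le>Suc n. of_nat (k^4) * J n k * pb (k-1) y)"
    by (simp add: J_zero)
  also have "\<dots> = (\<Sum>k\<le>n. of_nat ((k+1)^4) * J n (Suc k) * pb k y)"
    by (simp add: sum.atMost_Suc_shift del: sum.atMost_Suc)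
  also have "\<dots> = (\<Sum>k\<le>Suc n. of_nat ((k+1)^4) * J n (Suc k) * pb k y)"
    by (simp add: J_zero)
  finally have *: "(Cop ^^ Suc n) (\<lambda>_. 1) y = (\<Sum>k\<le>Suc n. (if k = 0 then 0 else J n (k-1)) * pb k y)
     + (\<Sum>k\<le>Suc n. of_nat (k^2 + (k+1)^2) * J n k * pb k y)
     + (\<Sum>k\<le>Suc n. of_nat ((k+1)^4) * J n (Suc k) * pb k y)" .
  have "\<And>k. J (Suc n) k * pb k y = (if k = 0 then 0 else J n (k-1)) * pb k y
     + of_nat (k^2 + (k+1)^2) * J n k * pb k y + of_nat ((k+1)^4) * J n (Suc k) * pb k y"
    by (simp only: J_rec distrib_right)
  then have "(\<Sum>k\<le>Suc n. J (Suc n) k * pb k y) = (\<Sum>k\<le>Suc n. (if k = 0 then 0 else J n (k-1)) * pb k y)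
     + (\<Sum>k\<le>Suc n. of_nat (k^2 + (k+1)^2) * J n k * pb k y)
     + (\<Sum>k\<le>Suc n. of_nat ((k+1)^4) * J n (Suc k) * pb k y)"
    by (simp only: sum.distrib)
  then show ?case using * by (simp only:)
qed

lemma pb_0: "0 < k \<Longrightarrow> pb k 0 = 0"
proof -
  assume "0 < k"
  then obtain m where m: "k = Suc m" by (cases k) auto
  show ?thesis unfolding pb_def m ff_0 by simp
qed

lemma Cop_iter_0: "(Cop ^^ n) (\<lambda>_. 1) 0 = J n 0"
proof -
  have "(\<Sum>k\<le>n. J n k * pb k 0) = (\<Sum>k\<in>{0}. J n k * pb k 0)"
    by (rule sum.mono_neutral_right) (auto simp: pb_0)
  also have "\<dots> = J n 0" by (simp add: pb_def)
  finally show ?thesis using Cop_iter[of n 0] by (simp only:)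
qed



definition Bop :: "(rat \<Rightarrow> rat) \<Rightarrow> rat \<Rightarrow> rat" where
  "Bop f y = (y+1)^2 * f (y+1) - y^2 * f y"

fun Qf :: "nat \<Rightarrow> rat \<Rightarrow> rat" where
  "Qf 0 = (\<lambda>_. 1)"
| "Qf (Suc 0) = (\<lambda>_. 1)"
| "Qf (Suc (Suc m)) = (\<lambda>y. Qf (Suc m) y - Cop (Qf m) y)"

lemma Bop_Cop: "Bop g y = Cop g y + y * g y"
  by (simp add: Bop_def Cop_def algebra_simps power2_eq_square)

lemma Cop_X: "Cop (\<lambda>y. y * g y) y = Bop g y + y * Bop g y"
  by (simp add: Bop_def Cop_def algebra_simps power2_eq_square)

lemma Cop_scale: "Cop (\<lambda>y. c * g y) y = c * Cop g y"
  by (simp add: Cop_def algebra_simps)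

lemma Qf_odd_even:
  "Qf (Suc (2*n)) = (\<lambda>y. (-1)^n * (Bop ^^ n) (\<lambda>_. 1) y) \<and>
   Qf (Suc (Suc (2*n))) = (\<lambda>y. (-1)^(Suc n) * y * (Bop ^^ n) (\<lambda>_. 1) y)"
proof (induction n)
  case 0
  show ?case by (auto simp: Cop_def fun_eq_iff power2_eq_square algebra_simps)
next
  case (Suc n)
  define g where "g = (Bop ^^ n) (\<lambda>_. 1)"
  have A: "Qf (Suc (2*n)) = (\<lambda>y. (-1)^n * g y)" unfolding g_def by (rule conjunct1[OF Suc.IH])
  have B: "Qf (Suc (Suc (2*n))) = (\<lambda>y. (-1)^(Suc n) * y * g y)" unfolding g_def by (rule conjunct2[OF Suc.IH])
  have g1: "(Bop ^^ Suc n) (\<lambda>_. 1) = Bop g" by (simp add: g_def)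
  have C1: "Qf (Suc (2 * Suc n)) = (\<lambda>y. (-1)^(Suc n) * Bop g y)"
  proof (rule ext)
    fix y
    have e: "Suc (2 * Suc n) = Suc (Suc (Suc (2*n)))" by simp
    have "Qf (Suc (2 * Suc n)) y = Qf (Suc (Suc (2*n))) y - Cop (Qf (Suc (2*n))) y"
      by (simp only: e Qf.simps(3))
    also have "\<dots> = (-1)^(Suc n) * y * g y - (-1)^n * Cop g y"
      by (simp only: A B Cop_scale)
    also have "\<dots> = (-1)^(Suc n) * Bop g y" by (simp add: Bop_Cop algebra_simps)
    finally show "Qf (Suc (2 * Suc n)) y = (-1)^(Suc n) * Bop g y" .
  qed
  have C2: "Qf (Suc (Suc (2 * Suc n))) = (\<lambda>y. (-1)^(Suc (Suc n)) * y * Bop g y)"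
  proof (rule ext)
    fix y
    have e2: "2 * Suc n = Suc (Suc (2*n))" by simp
    have B2: "Qf (2 * Suc n) = (\<lambda>y. (-1)^(Suc n) * y * g y)" using B by (simp only: e2)
    have "Qf (Suc (Suc (2 * Suc n))) y = Qf (Suc (2 * Suc n)) y - Cop (Qf (2 * Suc n)) y"
      by (simp only: Qf.simps(3)[of "2 * Suc n"])
    also have "Cop (Qf (2 * Suc n)) y = (-1)^(Suc n) * Cop (\<lambda>y. y * g y) y"
      unfolding B2 using Cop_scale[of "(-1)^(Suc n)" "\<lambda>y. y * g y" y] by (simp add: mult.assoc)
    also have "Qf (Suc (2 * Suc n)) y - (-1)^(Suc n) * Cop (\<lambda>y. y * g y) y = (-1)^(Suc (Suc n)) * y * Bop g y"
      by (simp only: C1 Cop_X) (simp add: algebra_simps)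
    finally show "Qf (Suc (Suc (2 * Suc n))) y = (-1)^(Suc (Suc n)) * y * Bop g y" .
  qed
  show ?case using C1 C2 g1 by simp
qed

lemma Qf_even_0: "0 < n \<Longrightarrow> Qf (2*n) 0 = 0"
proof -
  assume "0 < n"
  then obtain m where m: "n = Suc m" by (cases n) auto
  have "2*n = Suc (Suc (2*m))" using m by simp
  then have "Qf (2*n) = (\<lambda>y. (-1)^(Suc m) * y * (Bop ^^ m) (\<lambda>_. 1) y)"
    using conjunct2[OF Qf_odd_even[of m]] by (simp only:)
  then show ?thesis by simp
qed

definition fC :: "nat \<Rightarrow> rat" where "fC j = (Cop ^^ j) (\<lambda>_. 1) 0"

lemma Cop_iter_fun: "(Cop ^^ Suc j) (\<lambda>_. 1) = Cop ((Cop ^^ j) (\<lambda>_. 1))" by simp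

lemma Qf_expand: "Qf m y = (\<Sum>j\<le>m. (-1)^j * of_nat ((m-j) choose j) * (Cop ^^ j) (\<lambda>_. 1) y)"
proof (induction m arbitrary: y rule: Qf.induct)
  case 1 then show ?case by simp
next
  case 2 then show ?case by simp
next
  case (3 m)
  define P where "P j = (Cop ^^ j) (\<lambda>_. 1)" for j
  define c where "c m j = (-1)^j * (of_nat ((m-j) choose j) :: rat)" for m j
  have IH1: "\<And>y. Qf (Suc m) y = (\<Sum>j\<le>Suc m. c (Suc m) j * P j y)" using 3 by (simp add: P_def c_def)
  have IH0: "\<And>y. Qf m y = (\<Sum>j\<le>m. c m j * P j y)" using 3 by (simp add: P_def c_def)
  have eq0: "Qf m = (\<lambda>y. \<Sum>j\<le>m. c m j * P j y)" using IH0 by (rule ext)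
  have "Cop (Qf m) y = (\<Sum>j\<le>m. c m j * Cop (P j) y)" unfolding eq0 by (rule Cop_sum)
  also have "\<dots> = (\<Sum>j\<le>m. c m j * P (Suc j) y)" by (simp add: P_def)
  also have "\<dots> = (\<Sum>j\<le>Suc m. (if j = 0 then 0 else c m (j-1)) * P j y)"
    by (simp add: sum.atMost_Suc_shift del: sum.atMost_Suc)
  also have "\<dots> = (\<Sum>j\<le>Suc (Suc m). (if j = 0 then 0 else c m (j-1)) * P j y)"
    by (simp add: c_def)
  finally have CQ: "Cop (Qf m) y = (\<Sum>j\<le>Suc (Suc m). (if j = 0 then 0 else c m (j-1)) * P j y)" .
  have Q1: "Qf (Suc m) y = (\<Sum>j\<le>Suc (Suc m). c (Suc m) j * P j y)"
    using IH1[of y] by (simp add: c_def)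
  have pas: "c (Suc (Suc m)) j = c (Suc m) j - (if j = 0 then 0 else c m (j-1))" if "j \<le> Suc (Suc m)" for j
  proof (cases j)
    case 0 then show ?thesis by (simp add: c_def)
  next
    case (Suc i)
    show ?thesis
    proof (cases "j \<le> Suc m")
      case True
      then have "Suc (Suc m) - j = Suc (Suc m - j)" by simp
      then have "((Suc (Suc m) - j) choose j) = ((Suc m - j) choose i) + ((Suc m - j) choose j)"
        using Suc by simp
      moreover have "Suc m - j = m - i" using Suc by simp
      ultimately show ?thesis using Suc by (simp add: c_def algebra_simps)
    next
      case False
      then have "j = Suc (Suc m)" using that by simp
      then show ?thesis using Suc by (simp add: c_def)
    qed
  qed
  have "Qf (Suc (Suc m)) y = Qf (Suc m) y - Cop (Qf m) y" by simp
  also have "\<dots> = (\<Sum>j\<le>Suc (Suc m). (c (Suc m) j - (if j = 0 then 0 else c m (j-1))) * P j y)"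
    unfolding Q1 CQ sum_subtractf[symmetric] by (simp add: algebra_simps)
  also have "\<dots> = (\<Sum>j\<le>Suc (Suc m). c (Suc (Suc m)) j * P j y)"
    by (rule sum.cong) (simp_all add: pas)
  finally show ?case by (simp add: c_def P_def)
qed

definition Rf :: "(nat \<Rightarrow> rat) \<Rightarrow> nat \<Rightarrow> rat" where
  "Rf w n = (\<Sum>d\<le>n. (-1)^d * of_nat ((n+d) choose (2*d)) * w (n-d))"

lemma fC_rec: "0 < n \<Longrightarrow> Rf fC n = 0"
proof -
  assume n: "0 < n"
  have "0 = Qf (2*n) 0" using Qf_even_0[OF n] by simp
  also have "\<dots> = (\<Sum>j\<le>2*n. (-1)^j * of_nat ((2*n-j) choose j) * fC j)"
    by (simp add: Qf_expand fC_def)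
  also have "\<dots> = (\<Sum>j\<le>n. (-1)^j * of_nat ((2*n-j) choose j) * fC j)"
    by (rule sum.mono_neutral_right) auto
  also have "\<dots> = (\<Sum>d\<le>n. (-1)^(n-d) * of_nat ((2*n-(n-d)) choose (n-d)) * fC (n-d))"
    using sum.atLeastAtMost_rev[of "\<lambda>j. (-1)^j * of_nat ((2*n-j) choose j) * fC j" 0 n]
    by (simp add: atLeast0AtMost)
  also have "\<dots> = (\<Sum>d\<le>n. (-1)^n * ((-1)^d * of_nat ((n+d) choose (2*d)) * fC (n-d)))"
  proof (rule sum.cong)
    fix d assume "d \<in> {..n}"
    then have d: "d \<le> n" by simp
    have 1: "2*n-(n-d) = n+d" using d by simp
    have 2: "(n+d) choose (n-d) = (n+d) choose (2*d)"
      using binomial_symmetric[of "n-d" "n+d"] d by (simp add: numeral_2_eq_2)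
    have 3: "(-1::rat)^n = (-1)^(n-d) * (-1)^d"
      using d by (simp add: power_add[symmetric])
    have 4: "(-1::rat)^(n-d) = (-1)^n * (-1)^d"
      using 3 by (simp add: algebra_simps)
    show "(-1)^(n-d) * of_nat ((2*n-(n-d)) choose (n-d)) * fC (n-d)
        = (-1)^n * ((-1)^d * of_nat ((n+d) choose (2*d)) * fC (n-d))"
      unfolding 1 2 4 by (simp add: algebra_simps)
  qed simp
  also have "\<dots> = (-1)^n * Rf fC n" by (simp add: Rf_def sum_distrib_left)
  finally show ?thesis by simp
qed



abbreviation sr :: "nat \<Rightarrow> nat \<Rightarrow> rat" where "sr k m \<equiv> of_nat (seidel k m)"

lemma seidel_SS: "1 \<le> k \<Longrightarrow> k \<le> (m+3) div 2 \<Longrightarrow> seidel k (Suc (Suc m)) =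
   (if even m then (\<Sum>i\<in>{k..(m + 2) div 2}. seidel i (Suc m)) else (\<Sum>i\<in>{1..k}. seidel i (Suc m)))"
  by (simp only: seidel.simps) simp

declare seidel.simps(3)[simp del]

lemma seidel_even: "1 \<le> k \<Longrightarrow> k \<le> Suc n \<Longrightarrow> seidel k (Suc (Suc (2*n))) = (\<Sum>i\<in>{k..Suc n}. seidel i (Suc (2*n)))"
proof -
  assume k: "1 \<le> k" "k \<le> Suc n"
  have "seidel k (Suc (Suc (2*n))) = (\<Sum>i\<in>{k..(2*n + 2) div 2}. seidel i (Suc (2*n)))"
    using seidel_SS[of k "2*n"] k by simp
  moreover have "(2*n+2) div 2 = Suc n" by simp
  ultimately show ?thesis by (simp only:)
qed

lemma seidel_odd: "1 \<le> k \<Longrightarrow> k \<le> Suc (Suc n) \<Longrightarrow> seidel k (Suc (Suc (Suc (2*n)))) = (\<Sum>i\<in>{1..k}. seidel i (Suc (Suc (2*n))))"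
proof -
  assume k: "1 \<le> k" "k \<le> Suc (Suc n)"
  have e2: "(Suc (2*n) + 3) div 2 = Suc (Suc n)" by simp
  show ?thesis using seidel_SS[of k "Suc (2*n)"] k e2 by simp
qed

lemma seidel_vanish: "(m+1) div 2 < k \<Longrightarrow> seidel k m = 0"
proof (cases m)
  case 0 then show ?thesis by simp
next
  case (Suc m')
  assume a: "(m+1) div 2 < k"
  show ?thesis
  proof (cases m')
    case 0 then show ?thesis using a Suc by simp
  next
    case (Suc m'')
    then show ?thesis using a \<open>m = Suc m'\<close> by (simp add: seidel.simps(3))
  qed
qed

definition hh :: "nat \<Rightarrow> rat" where "hh j = (if j = 0 then 1 else sr 1 (2*j))"

definition Ef :: "nat \<Rightarrow> nat \<Rightarrow> rat" where
  "Ef k n = (\<Sum>d<k. (-1)^d * of_nat ((k-1+d) choose (2*d)) * hh (n-d))"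
definition Of :: "nat \<Rightarrow> nat \<Rightarrow> rat" where
  "Of k n = (\<Sum>d<k. (-1)^d * of_nat ((k+d) choose (2*d+1)) * hh (n-d))"

lemma Ef_ext: "0 < k \<Longrightarrow> k \<le> K \<Longrightarrow> Ef k n = (\<Sum>d<K. (-1)^d * of_nat ((k-1+d) choose (2*d)) * hh (n-d))"
  unfolding Ef_def by (rule sum.mono_neutral_left) auto

lemma Of_ext: "k \<le> K \<Longrightarrow> Of k n = (\<Sum>d<K. (-1)^d * of_nat ((k+d) choose (2*d+1)) * hh (n-d))"
  unfolding Of_def by (rule sum.mono_neutral_left) auto

lemma hs1: "(\<Sum>i\<in>{1..k}. (i+d) choose (2*d+1)) = (k+1+d) choose (2*d+2)"
  by (induction k) (simp_all add: add.commute add.left_commute)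

lemma hs2: "(\<Sum>i\<in>{1..k}. (i-1+d) choose (2*d)) = (k+d) choose (2*d+1)"
proof (induction k)
  case 0 then show ?case by simp
next
  case (Suc k) then show ?case by (simp add: add.commute add.left_commute)
qed

lemma Ef_split: "0 < k \<Longrightarrow> Ef k (Suc N) = hh (Suc N) + (\<Sum>d<k. (-1)^(Suc d) * of_nat ((k+d) choose (2*d+2)) * hh (N-d))"
proof -
  assume k: "0 < k"
  then obtain k' where k': "k = Suc k'" by (cases k) auto
  have "Ef k (Suc N) = (\<Sum>d<Suc k'. (-1)^d * of_nat ((k'+d) choose (2*d)) * hh (Suc N-d))"
    by (simp add: Ef_def k')
  also have "\<dots> = hh (Suc N) + (\<Sum>d<k'. (-1)^(Suc d) * of_nat ((k'+Suc d) choose (2*Suc d)) * hh (Suc N - Suc d))"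
    by (simp only: sum.lessThan_Suc_shift) simp
  also have "(\<Sum>d<k'. (-1)^(Suc d) * of_nat ((k'+Suc d) choose (2*Suc d)) * hh (Suc N - Suc d))
      = (\<Sum>d<k'. (-1)^(Suc d) * of_nat ((k+d) choose (2*d+2)) * hh (N-d))"
    by (simp add: k')
  also have "\<dots> = (\<Sum>d<k. (-1)^(Suc d) * of_nat ((k+d) choose (2*d+2)) * hh (N-d))"
    by (simp add: k' binomial_eq_0)
  finally show ?thesis .
qed

lemma Ef_pascal: "0 < k \<Longrightarrow> Ef (Suc k) (Suc N) = Ef k (Suc N) - Of k N"
proof -
  assume k: "0 < k"
  have "Ef (Suc k) (Suc N) = hh (Suc N) + (\<Sum>d<Suc k. (-1)^(Suc d) * of_nat ((Suc k+d) choose (2*d+2)) * hh (N-d))"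
    using Ef_split[of "Suc k" N] by simp
  also have "(\<Sum>d<Suc k. (-1)^(Suc d) * of_nat ((Suc k+d) choose (2*d+2)) * hh (N-d))
     = (\<Sum>d<k. (-1)^(Suc d) * of_nat ((Suc k+d) choose (2*d+2)) * hh (N-d))"
    by (simp add: binomial_eq_0)
  also have "\<dots> = (\<Sum>d<k. (-1)^(Suc d) * of_nat ((k+d) choose (2*d+2)) * hh (N-d))
       - (\<Sum>d<k. (-1)^d * of_nat ((k+d) choose (2*d+1)) * hh (N-d))"
    unfolding sum_subtractf[symmetric]
  proof (rule sum.cong)
    fix d
    have "((Suc k + d) choose (2*d+2)) = ((k+d) choose (2*d+1)) + ((k+d) choose (2*d+2))"
      by (simp add: numeral_2_eq_2)
    then show "(-1)^(Suc d) * of_nat ((Suc k+d) choose (2*d+2)) * hh (N-d)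
       = (-1)^(Suc d) * of_nat ((k+d) choose (2*d+2)) * hh (N-d) - (-1)^d * of_nat ((k+d) choose (2*d+1)) * hh (N-d)"
      by (simp add: algebra_simps)
  qed simp
  finally show ?thesis using Ef_split[OF k, of N] by (simp add: Of_def)
qed

definition Sprop :: "nat \<Rightarrow> bool" where
  "Sprop n = (\<forall>k. 1 \<le> k \<and> k \<le> Suc n \<longrightarrow> sr k (Suc (2*n)) = Of k n)"

lemma P_from_S: "Sprop n \<Longrightarrow> 1 \<le> k \<Longrightarrow> k \<le> Suc n \<Longrightarrow> sr k (Suc (Suc (2*n))) = Ef k (Suc n)"
proof -
  assume S: "Sprop n" and k: "1 \<le> k" "k \<le> Suc n"
  have "sr k (Suc (Suc (2*n))) = (\<Sum>i\<in>{k..Suc n}. sr i (Suc (2*n)))"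
    using seidel_even[OF k] by (simp only: of_nat_sum)
  also have "\<dots> = (\<Sum>i\<in>{k..Suc n}. Of i n)"
    by (rule sum.cong) (use S k in \<open>auto simp: Sprop_def\<close>)
  finally have A: "sr k (Suc (Suc (2*n))) = (\<Sum>i\<in>{k..Suc n}. Of i n)" .
  have "hh (Suc n) = sr 1 (Suc (Suc (2*n)))" by (simp add: hh_def)
  also have "\<dots> = (\<Sum>i\<in>{1..Suc n}. sr i (Suc (2*n)))"
    using seidel_even[of 1 n] by (simp only: of_nat_sum)
  also have "\<dots> = (\<Sum>i\<in>{1..Suc n}. Of i n)"
    by (rule sum.cong) (use S in \<open>auto simp: Sprop_def\<close>)
  also have "\<dots> = (\<Sum>i\<in>{1..<k}. Of i n) + (\<Sum>i\<in>{k..Suc n}. Of i n)"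
  proof -
    have U: "{1..Suc n} = {1..<k} \<union> {k..Suc n}" using k by auto
    show ?thesis unfolding U by (rule sum.union_disjoint) auto
  qed
  finally have B: "hh (Suc n) = (\<Sum>i\<in>{1..<k}. Of i n) + (\<Sum>i\<in>{k..Suc n}. Of i n)" .
  have "(\<Sum>i\<in>{1..<k}. Of i n) = (\<Sum>i\<in>{1..<k}. \<Sum>d<k. (-1)^d * of_nat ((i+d) choose (2*d+1)) * hh (n-d))"
    by (rule sum.cong[OF refl], rule Of_ext) auto
  also have "\<dots> = (\<Sum>d<k. (-1)^d * hh (n-d) * of_nat (\<Sum>i\<in>{1..<k}. (i+d) choose (2*d+1)))"
    by (subst sum.swap) (simp add: sum_distrib_left algebra_simps)
  also have "\<dots> = (\<Sum>d<k. (-1)^d * hh (n-d) * of_nat ((k+d) choose (2*d+2)))"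
  proof (rule sum.cong)
    fix d
    have U2: "{1..<k} = {1..k-1}" using k by auto
    have "(\<Sum>i\<in>{1..<k}. (i+d) choose (2*d+1)) = (k-1+1+d) choose (2*d+2)" unfolding U2 by (rule hs1)
    then show "(-1)^d * hh (n-d) * of_nat (\<Sum>i\<in>{1..<k}. (i+d) choose (2*d+1)) = (-1)^d * hh (n-d) * of_nat ((k+d) choose (2*d+2))"
      using k by simp
  qed simp
  finally have C: "(\<Sum>i\<in>{1..<k}. Of i n) = (\<Sum>d<k. (-1)^d * hh (n-d) * of_nat ((k+d) choose (2*d+2)))" .
  have D: "Ef k (Suc n) = hh (Suc n) - (\<Sum>d<k. (-1)^d * hh (n-d) * of_nat ((k+d) choose (2*d+2)))"
    using Ef_split[of k n] k by (simp add: sum_negf mult.commute mult.left_commute mult.assoc)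
  show ?thesis using A B C D by simp
qed

lemma Z_from_S: "Sprop n \<Longrightarrow> Ef (Suc (Suc n)) (Suc n) = 0"
proof -
  assume S: "Sprop n"
  have "Ef (Suc n) (Suc n) = sr (Suc n) (Suc (Suc (2*n)))" using P_from_S[OF S, of "Suc n"] by simp
  also have "\<dots> = sr (Suc n) (Suc (2*n))" using seidel_even[of "Suc n" n] by simp
  also have "\<dots> = Of (Suc n) n" using S by (simp add: Sprop_def)
  finally show ?thesis using Ef_pascal[of "Suc n" n] by simp
qed

lemma S_step: "Sprop n \<Longrightarrow> Sprop (Suc n)"
proof -
  assume S: "Sprop n"
  show ?thesis unfolding Sprop_def
  proof (intro allI impI)
    fix k assume k: "1 \<le> k \<and> k \<le> Suc (Suc n)"
    have E: "sr i (Suc (Suc (2*n))) = Ef i (Suc n)" if "i \<in> {1..k}" for i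
    proof (cases "i \<le> Suc n")
      case True then show ?thesis using that P_from_S[OF S] by simp
    next
      case False
      then have "i = Suc (Suc n)" using that k by simp
      moreover have "seidel (Suc (Suc n)) (Suc (Suc (2*n))) = 0" by (rule seidel_vanish) simp
      ultimately show ?thesis using Z_from_S[OF S] by simp
    qed
    have "sr k (Suc (2 * Suc n)) = sr k (Suc (Suc (Suc (2*n))))" by simp
    also have "\<dots> = (\<Sum>i\<in>{1..k}. sr i (Suc (Suc (2*n))))" using seidel_odd[of k n] k by simp
    also have "\<dots> = (\<Sum>i\<in>{1..k}. Ef i (Suc n))" by (rule sum.cong) (simp_all add: E)
    also have "\<dots> = (\<Sum>i\<in>{1..k}. \<Sum>d<k. (-1)^d * of_nat ((i-1+d) choose (2*d)) * hh (Suc n-d))"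
      by (rule sum.cong[OF refl], rule Ef_ext) auto
    also have "\<dots> = (\<Sum>d<k. (-1)^d * hh (Suc n-d) * of_nat (\<Sum>i\<in>{1..k}. (i-1+d) choose (2*d)))"
      by (subst sum.swap) (simp add: sum_distrib_left algebra_simps)
    also have "\<dots> = (\<Sum>d<k. (-1)^d * hh (Suc n-d) * of_nat ((k+d) choose (2*d+1)))"
      by (rule sum.cong[OF refl]) (simp only: hs2)
    also have "\<dots> = Of k (Suc n)" by (simp add: Of_def algebra_simps)
    finally show "sr k (Suc (2 * Suc n)) = Of k (Suc n)" .
  qed
qed

lemma S_all: "Sprop n"
proof (induction n)
  case 0
  show ?case unfolding Sprop_def
  proof (intro allI impI)
    fix k assume "1 \<le> k \<and> k \<le> Suc 0"
    then have "k = 1" by simp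
    then show "sr k (Suc (2*0)) = Of k 0" by (simp add: Of_def hh_def)
  qed
next
  case (Suc n) then show ?case by (rule S_step)
qed

lemma hh_rec: "0 < N \<Longrightarrow> Rf hh N = 0"
proof -
  assume "0 < N"
  then obtain n where n: "N = Suc n" by (cases N) auto
  have "Rf hh N = Ef (Suc N) N" by (simp add: Rf_def Ef_def lessThan_Suc_atMost)
  then show ?thesis using Z_from_S[OF S_all[of n]] n by simp
qed



lemma Rf_Suc: "Rf w (Suc M) = w (Suc M) + (\<Sum>d\<le>M. (-1)^(Suc d) * of_nat ((Suc M + Suc d) choose (2*Suc d)) * w (M - d))"
  unfolding Rf_def by (simp only: sum.atMost_Suc_shift) simp

lemma R_unique:
  assumes u: "\<And>N. 0 < N \<Longrightarrow> Rf u N = 0" and v: "\<And>N. 0 < N \<Longrightarrow> Rf v N = 0"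
    and u0: "u 0 = v 0"
  shows "u n = v n"
proof (induction n rule: less_induct)
  case (less n)
  show ?case
  proof (cases n)
    case 0 then show ?thesis using u0 by simp
  next
    case (Suc M)
    have eq: "(\<Sum>d\<le>M. (-1)^(Suc d) * of_nat ((Suc M + Suc d) choose (2*Suc d)) * u (M - d))
       = (\<Sum>d\<le>M. (-1)^(Suc d) * of_nat ((Suc M + Suc d) choose (2*Suc d)) * v (M - d))"
      by (rule sum.cong[OF refl]) (simp add: less Suc)
    have "u (Suc M) = - (\<Sum>d\<le>M. (-1)^(Suc d) * of_nat ((Suc M + Suc d) choose (2*Suc d)) * u (M - d))"
      using u[of "Suc M"] Rf_Suc[of u M] by (simp add: eq_neg_iff_add_eq_0)
    also have "\<dots> = - (\<Sum>d\<le>M. (-1)^(Suc d) * of_nat ((Suc M + Suc d) choose (2*Suc d)) * v (M - d))"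
      by (simp only: eq)
    also have "\<dots> = v (Suc M)"
      using v[of "Suc M"] Rf_Suc[of v M] by (simp add: eq_neg_iff_add_eq_0)
    finally show ?thesis using Suc by simp
  qed
qed

lemma fC_hh: "fC n = hh n"
  by (rule R_unique[OF fC_rec hh_rec]) (simp_all add: fC_def hh_def)

theorem corollary3p6:
  shows "\<forall>N n. n \<le> N \<longrightarrow>
           fps_nth (cf_tail 1 N) n = (if n = 0 then 1 else of_nat (median_genocchi n))"
proof (intro allI impI)
  fix N n :: nat assume nN: "n \<le> N"
  have "fps_nth (cf_tail 1 N) n = Ab 1 N (2*n) 0" by (rule cf_tail_nth)
  also have "\<dots> = Au 1 (2*n) 0" by (rule Ab_Au) (use nN in simp_all)
  also have "\<dots> = J n 0" by (simp add: J_def)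
  also have "\<dots> = fC n" by (simp add: fC_def Cop_iter_0)
  also have "\<dots> = hh n" by (rule fC_hh)
  finally show "fps_nth (cf_tail 1 N) n = (if n = 0 then 1 else of_nat (median_genocchi n))"
    by (simp add: hh_def median_genocchi_def)
qed


end
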